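(* Let $t$, $q$, $r$ be integers with $q \geq 0$ and $2 \leq r \leq t-1$, and suppose that $x = tq + r$ is odd. Then there exists a coloring of the edges of the complete graph $K_x$ with $t$ colors such that every vertex is incident with at least $q$ edges of each color. *)

theory Defs
  imports Main
begin

definition edge_colouring :: "nat \<Rightarrow> nat \<Rightarrow> (nat set \<Rightarrow> nat) \<Rightarrow> bool" where
  "edge_colouring x t c \<longleftrightarrow> (\<forall>u<x. \<forall>v<x. u \<noteq> v \<longrightarrow> c {u, v} < t)"

definition colour_degree :: "nat \<Rightarrow> (nat set \<Rightarrow> nat) \<Rightarrow> nat \<Rightarrow> nat \<Rightarrow> nat" where
  "colour_degree x c v i = card {u. u < x \<and> u \<noteq> v \<and> c {u, v} = i}"

end

theory Submission
  imports Defs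
begin

definition gcol :: "nat \<Rightarrow> nat \<Rightarrow> nat \<Rightarrow> nat" where
  "gcol x t w = ((2*w) mod x - 2) mod t"

definition col :: "nat \<Rightarrow> nat \<Rightarrow> nat \<Rightarrow> nat \<Rightarrow> nat" where
  "col x t a b = (let s = (a+b) mod x in if s = 0 then gcol x t b
     else if s = 1 then (if a = 0 then gcol x t b else gcol x t a) else (s - 2) mod t)"

definition cc :: "nat \<Rightarrow> nat \<Rightarrow> nat set \<Rightarrow> nat" where
  "cc x t E = col x t (Min E) (Max E)"

lemma cc_pair: "cc x t {u,v} = col x t (min u v) (max u v)"
  unfolding cc_def by simp

lemma cc_lt: "0 < t \<Longrightarrow> cc x t E < t"
  unfolding cc_def col_def gcol_def Let_def by auto

lemma cc_gen:
  assumes "(u+v) mod x \<ge> 2"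
  shows "cc x t {u,v} = ((u+v) mod x - 2) mod t"
proof -
  have "min u v + max u v = u + v" by auto
  then show ?thesis using assms unfolding cc_pair col_def Let_def by auto
qed

lemma extra:
  assumes "odd x" "v < x" "(2*v) mod x \<ge> 2"
  shows "\<exists>w<x. w \<noteq> v \<and> (w + v) mod x < 2 \<and> cc x t {w,v} = gcol x t v"
proof (cases "2*v < x")
  case True
  have v0: "v \<noteq> 0" using assms by (cases "v = 0") auto
  show ?thesis
  proof (cases "v = 1")
    case True
    then show ?thesis using assms
      by (intro exI[of _ 0]) (auto simp: cc_pair col_def)
  next
    case False
    have "x + 1 - v < x" "x + 1 - v \<noteq> v" "v < x + 1 - v" using False v0 True assms(1) by auto
    moreover have "(x + 1 - v + v) mod x = 1"
    proof -
      have "x + 1 - v + v = x + 1" using True by simp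
      moreover have "1 < x" using True v0 False by simp
      ultimately show ?thesis using mod_add_self1[of x 1] by simp
    qed
    ultimately show ?thesis using v0
      by (intro exI[of _ "x+1-v"]) (auto simp: cc_pair col_def min_def max_def)
  qed
next
  case False
  have "2*v \<noteq> x" using assms(1) by auto
  with False have vx: "x - v < v" by auto
  have v0: "v \<noteq> 0" using assms by (cases "v = 0") auto
  have "(x - v + v) mod x = 0" using assms by auto
  then show ?thesis using vx v0 assms
    by (intro exI[of _ "x-v"]) (auto simp: cc_pair col_def min_def max_def)
qed

theorem lemma2:
  fixes t q r x :: nat
  assumes "2 \<le> r" and "r \<le> t - 1" and "x = t * q + r" and "odd x"
  shows "\<exists>c. edge_colouring x t c \<and>
              (\<forall>v<x. \<forall>i<t. colour_degree x c v i \<ge> q)"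
proof (intro exI[of _ "cc x t"] conjI allI impI)
  have t0: "0 < t" using assms by auto
  show "edge_colouring x t (cc x t)" unfolding edge_colouring_def using cc_lt[OF t0] by auto
  fix v i assume v: "v < x" and i: "i < t"
  define s where "s k = 2 + i + t*k" for k
  define uu where "uu k = (s k + x - v) mod x" for k
  have sx: "s k < x" if "k < q" for k
  proof -
    have "t * k \<le> t * (q - 1)" using that by (intro mult_le_mono2) simp
    also have "\<dots> = t*q - t" by (simp add: right_diff_distrib')
    finally have a: "t * k \<le> t*q - t" .
    have "t \<le> t*q" using that by simp
    then show ?thesis unfolding s_def using a assms i by linarith
  qed
  have uus: "(uu k + v) mod x = s k" if "k < q" for k
  proof -
    have "(uu k + v) mod x = (s k + x - v + v) mod x" unfolding uu_def by (simp add: mod_add_left_eq)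
    also have "\<dots> = (s k + x) mod x" using v by simp
    also have "\<dots> = s k" using sx[OF that] by simp
    finally show ?thesis .
  qed
  have sinj: "s k = s k' \<Longrightarrow> k = k'" for k k' unfolding s_def using t0 by auto
  define S where "S = {u. u < x \<and> u \<noteq> v \<and> cc x t {u, v} = i}"
  define h where "h k = (if s k = (2*v) mod x then (SOME w. w<x \<and> w \<noteq> v \<and> (w + v) mod x < 2 \<and> cc x t {w,v} = gcol x t v) else uu k)" for k
  have hS: "h k \<in> S \<and> (if s k = (2*v) mod x then (h k + v) mod x < 2 else (h k + v) mod x = s k)"
    if k: "k < q" for k
  proof (cases "s k = (2*v) mod x")
    case True
    then have "(2*v) mod x \<ge> 2" unfolding s_def by simp
    from someI_ex[OF extra[OF assms(4) v this, of t]] True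
    have w: "h k < x \<and> h k \<noteq> v \<and> (h k + v) mod x < 2 \<and> cc x t {h k,v} = gcol x t v"
      unfolding h_def by simp
    have "gcol x t v = i" unfolding gcol_def using True[symmetric] i unfolding s_def by simp
    then show ?thesis using w True unfolding S_def by simp
  next
    case False
    have hk: "h k = uu k" unfolding h_def using False by simp
    have "uu k < x" unfolding uu_def using v by simp
    moreover have "uu k \<noteq> v"
    proof
      assume "uu k = v"
      then have "(v + v) mod x = s k" using uus[OF k] by simp
      then show False using False by (simp add: mult_2)
    qed
    moreover have "cc x t {uu k, v} = i"
      using cc_gen[where x=x and u="uu k" and v=v and t=t] uus[OF k] i unfolding s_def by simp
    ultimately show ?thesis using hk uus[OF k] False unfolding S_def by simp
  qed
  have "inj_on h {..<q}"
  proof (rule inj_onI)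
    fix k k' assume k: "k \<in> {..<q}" and k': "k' \<in> {..<q}" and e: "h k = h k'"
    have g: "s k \<ge> 2" "s k' \<ge> 2" unfolding s_def by auto
    show "k = k'"
    proof (cases "s k = (2*v) mod x"; cases "s k' = (2*v) mod x")
    qed (use hS[of k] hS[of k'] k k' e g sinj in auto)
  qed
  moreover have "h ` {..<q} \<subseteq> S" using hS by auto
  moreover have "finite S" unfolding S_def by auto
  ultimately have "card {..<q} \<le> card S" by (meson card_inj_on_le)
  then show "q \<le> colour_degree x (cc x t) v i" unfolding colour_degree_def S_def by simp
qed

end
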